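(* The map $H_2$ satisfies $H_2\circ(12)=(12)(34)\circ H_2$.
   Context: Work over $\mathbb F_2$. $E(r)$ is the simplicial set whose $n$-simplices are tuples $(\sigma_0,\dots,\sigma_n)$ in $\Sigma_r$ ($d_i$ deletes, $s_i$ repeats the $i$-th entry), with $\Sigma_r$ acting by left multiplication entrywise; $\mathcal E(r)=N_*(E(r))$ is its normalized chain complex over $\mathbb F_2$ with the induced action. $\circ_E:E(2)\times E(2)\times E(2)\to E(4)$ applies coordinatewise the block composition $\Sigma_2\times\Sigma_2\times\Sigma_2\to\Sigma_4$ of permutations. The Shih homotopy $SHI:N_n(X\times Y)\to N_{n+1}(X\times Y)$ is zero for $n=0$, and for $n>0$ $$SHI(x\times y)=\sum s_{v_p+m}\cdots s_{v_1+m}s_{m-1}d_{n-p+1}\cdots d_nx\times s_{w_{q+1}+m}\cdots s_{w_1+m}d_{n-p-q}\cdots d_{n-p-1}y,$$ $m=n-p-q$, sum over disjoint $\{v_1<\dots<v_p\},\{w_1<\dots<w_{q+1}\}\subseteq\{0,\dots,p+q\}$ with $0\le p\le n-1$, $0\le q\le n-p-1$. $H_2:\mathcal E(2)\to\mathcal E(4)$ is the degree $1$ linear map $H_2(\sigma_0,\dots,\sigma_n)=N_*(\circ_E)((e,\dots,e)\otimes SHI(\sigma_0,\dots,\sigma_n)^{\otimes2})$, where $SHI(\sigma_0,\dots,\sigma_n)^{\otimes2}$ is $SHI$ of the diagonal simplex $(\sigma_0,\dots,\sigma_n)\times(\sigma_0,\dots,\sigma_n)$ of $E(2)\times E(2)$,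 paired with the constant simplex $(e,\dots,e)$ of $E(2)$ of the same dimension. $(12)$ acts on $\mathcal E(2)$ and $(12)(34)$ on $\mathcal E(4)$. *)

theory Defs
  imports "HOL-Combinatorics.Permutations"
begin

(* Permutations of {0..<r} (0-indexed), as functions nat => nat fixing everything >= r. *)
type_synonym perm = "nat \<Rightarrow> nat"

(* Simplices of E(r): an n-simplex is a list (sigma_0,...,sigma_n) of permutations in Sigma_r. *)
definition E_simplex :: "nat \<Rightarrow> perm list \<Rightarrow> bool" where
  "E_simplex r xs \<longleftrightarrow> xs \<noteq> [] \<and> (\<forall>p\<in>set xs. p permutes {..<r})"

definition face :: "nat \<Rightarrow> 'a list \<Rightarrow> 'a list" where
  "face i xs = take i xs @ drop (Suc i) xs"

definition degen :: "nat \<Rightarrow> 'a list \<Rightarrow> 'a list" where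
  "degen i xs = take (Suc i) xs @ drop i xs"

definition degenerate :: "'a list \<Rightarrow> bool" where
  "degenerate xs \<longleftrightarrow> (\<exists>i. Suc i < length xs \<and> xs ! i = xs ! Suc i)"

definition pdegenerate :: "'a list \<times> 'b list \<Rightarrow> bool" where
  "pdegenerate t \<longleftrightarrow> (\<exists>i. Suc i < length (fst t) \<and> fst t ! i = fst t ! Suc i
                              \<and> snd t ! i = snd t ! Suc i)"

(* Elements of the normalized chains N_*(E(r)) over F_2: finite sets of
   nondegenerate simplices (sum = symmetric difference). *)
definition E_chain :: "nat \<Rightarrow> perm list set \<Rightarrow> bool" where
  "E_chain r c \<longleftrightarrow> finite c \<and> (\<forall>s\<in>c. E_simplex r s \<and> \<not> degenerate s)"

definition SHI_index :: "nat \<Rightarrow> (nat \<times> nat \<times> nat set \<times> nat set) set" where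
  "SHI_index n = {(p, q, V, W). p < n \<and> q < n - p \<and> V \<subseteq> {0..p+q} \<and> W \<subseteq> {0..p+q}
        \<and> V \<inter> W = {} \<and> card V = p \<and> card W = Suc q}"

(* One summand of the Shih formula; fold applies operators in list order
   (i.e. the rightmost operator of the composite is applied first). *)
definition SHI_term :: "nat \<Rightarrow> nat \<times> nat \<times> nat set \<times> nat set \<Rightarrow> 'a list \<times> 'b list
     \<Rightarrow> 'a list \<times> 'b list" where
  "SHI_term n i t = (case i of (p, q, V, W) \<Rightarrow>
     (let m = n - p - q in
      (fold degen (map (\<lambda>v. v + m) (sorted_list_of_set V))
         (degen (m - 1) (fold face (rev [n - p + 1..<n + 1]) (fst t))),
       fold degen (map (\<lambda>w. w + m) (sorted_list_of_set W))
         (fold face (rev [n - p - q..<n - p]) (snd t)))))"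

(* Shih homotopy on a generator x \<times> y of N_n(X \<times> Y): the mod-2 sum of the summands,
   with degenerate summands discarded (they vanish in normalized chains). *)
definition SHI :: "'a list \<times> 'b list \<Rightarrow> ('a list \<times> 'b list) set" where
  "SHI t = (let n = length (fst t) - 1 in
     if n = 0 then {}
     else {u. odd (card {i \<in> SHI_index n. SHI_term n i t = u}) \<and> \<not> pdegenerate u})"

(* block composition Sigma_2 x Sigma_2 x Sigma_2 -> Sigma_4 *)
definition block :: "perm \<Rightarrow> perm \<Rightarrow> perm \<Rightarrow> perm" where
  "block s t1 t2 = (\<lambda>k. if k < 4 then 2 * s (k div 2) + (if k div 2 = 0 then t1 else t2) (k mod 2)
                         else k)"

(* H_2 on a generator sigma: N_*(circ_E)((e,...,e) x SHI(sigma x sigma)), mod 2,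
   degenerate images discarded *)
definition H2_gen :: "perm list \<Rightarrow> perm list set" where
  "H2_gen s = {c. odd (card {u \<in> SHI (s, s). map2 (block id) (fst u) (snd u) = c})
                  \<and> \<not> degenerate c}"

definition H2 :: "perm list set \<Rightarrow> perm list set" where
  "H2 c = {u. odd (card {s \<in> c. u \<in> H2_gen s})}"

definition E_act :: "perm \<Rightarrow> perm list set \<Rightarrow> perm list set" where
  "E_act \<tau> c = map (\<lambda>\<sigma>. \<tau> \<circ> \<sigma>) ` c"

end

theory Submission
  imports Defs
begin

lemma invol_image_eq:
  assumes "\<And>x. h (h x) = x"
  shows "{x. P (h x)} = h ` {x. P x}"
proof
  show "{x. P (h x)} \<subseteq> h ` {x. P x}"
  proof
    fix x assume "x \<in> {x. P (h x)}"
    then have "h x \<in> {x. P x}" by simp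
    then show "x \<in> h ` {x. P x}" using assms by (metis image_eqI)
  qed
  show "h ` {x. P x} \<subseteq> {x. P (h x)}" using assms by auto
qed

lemma invol_inj: assumes "\<And>x. h (h x) = x" shows "inj h"
  by (metis assms injI)

lemma face_map: "face i (map h xs) = map h (face i xs)"
  by (simp add: face_def take_map drop_map)

lemma degen_map: "degen i (map h xs) = map h (degen i xs)"
  by (simp add: degen_def take_map drop_map)

lemma fold_face_map: "fold face is (map h xs) = map h (fold face is xs)"
  by (induction "is" arbitrary: xs) (simp_all add: face_map)

lemma fold_degen_map: "fold degen is (map h xs) = map h (fold degen is xs)"
  by (induction "is" arbitrary: xs) (simp_all add: degen_map)

lemma set_face: "set (face i xs) \<subseteq> set xs"
  unfolding face_def by (auto dest: in_set_takeD in_set_dropD)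

lemma set_degen: "set (degen i xs) \<subseteq> set xs"
  unfolding degen_def by (auto dest: in_set_takeD in_set_dropD)

lemma set_fold_face: "set (fold face is xs) \<subseteq> set xs"
  by (induction "is" arbitrary: xs) (simp_all, meson set_face order_trans)

lemma set_fold_degen: "set (fold degen is xs) \<subseteq> set xs"
  by (induction "is" arbitrary: xs) (simp_all, meson set_degen order_trans)

lemma SHI_term_map:
  "SHI_term n i (map h xs, map g ys) = (map h (fst (SHI_term n i (xs, ys))), map g (snd (SHI_term n i (xs, ys))))"
  by (cases i) (simp add: SHI_term_def Let_def fold_face_map fold_degen_map degen_map)

lemma SHI_term_set:
  "set (fst (SHI_term n i (xs, ys))) \<subseteq> set xs \<and> set (snd (SHI_term n i (xs, ys))) \<subseteq> set ys"
proof -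
  obtain p q V W where i: "i = (p, q, V, W)" by (cases i) auto
  have a: "set (fold degen is (degen j (fold face js xs))) \<subseteq> set xs" for "is" j js
    by (meson order_trans set_fold_face set_fold_degen set_degen)
  have b: "set (fold degen is (fold face js ys)) \<subseteq> set ys" for "is" js
    by (meson order_trans set_fold_face set_fold_degen)
  show ?thesis unfolding i SHI_term_def Let_def prod.case fst_conv snd_conv using a b by blast
qed

lemma length_face: "i < length xs \<Longrightarrow> length (face i xs) = length xs - 1"
  by (simp add: face_def)

lemma length_degen: "i < length xs \<Longrightarrow> length (degen i xs) = Suc (length xs)"
  by (simp add: degen_def)

lemma length_fold_face: "b \<le> length xs \<Longrightarrow> length (fold face (rev [a..<b]) xs) = length xs - (b - a)"
proof (induction b arbitrary: xs)
  case 0 then show ?case by simp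
next
  case (Suc b)
  show ?case
  proof (cases "a \<le> b")
    case True
    then have "rev [a..<Suc b] = b # rev [a..<b]" by simp
    then have "fold face (rev [a..<Suc b]) xs = fold face (rev [a..<b]) (face b xs)" by simp
    moreover have "length (face b xs) = length xs - 1" using Suc.prems by (simp add: length_face)
    ultimately show ?thesis using Suc.IH[of "face b xs"] Suc.prems True by simp
  next
    case False then show ?thesis by simp
  qed
qed

lemma length_fold_degen: "\<forall>j<length L. L ! j < length xs + j \<Longrightarrow> length (fold degen L xs) = length xs + length L"
proof (induction L arbitrary: xs)
  case Nil then show ?case by simp
next
  case (Cons a L)
  have a: "a < length xs" using Cons.prems by force
  have "\<forall>j<length L. L ! j < length (degen a xs) + j"
    using Cons.prems a by (auto simp: length_degen)
  then show ?case using Cons.IH a by (simp add: length_degen)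
qed

lemma sorted_gap: "sorted_wrt (<) L \<Longrightarrow> j + d < length L \<Longrightarrow> L ! j + d \<le> L ! (j + d)"
proof (induction d)
  case 0 then show ?case by simp
next
  case (Suc d)
  have "L ! (j + d) < L ! (j + Suc d)" using Suc.prems sorted_wrt_nth_less by fastforce
  then show ?case using Suc by simp
qed

lemma sorted_bound:
  assumes "finite V" "V \<subseteq> {0..N}" "j < card V"
  shows "sorted_list_of_set V ! j + (card V - 1 - j) \<le> N"
proof -
  let ?L = "sorted_list_of_set V"
  have len: "length ?L = card V" by simp
  have "?L ! j + (card V - 1 - j) \<le> ?L ! (card V - 1)"
    using sorted_gap[of ?L j "card V - 1 - j"] assms len by auto
  moreover have "?L ! (card V - 1) \<in> V"
    using assms len by (metis diff_less less_nat_zero_code nat_neq_iff nth_mem set_sorted_list_of_set zero_less_one)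
  ultimately show ?thesis using assms by auto
qed

lemma SHI_term_length:
  assumes "i \<in> SHI_index n" "length xs = Suc n" "length ys = Suc n" "n > 0"
  shows "length (fst (SHI_term n i (xs, ys))) = n + 2"
    "length (snd (SHI_term n i (xs, ys))) = n + 2"
proof -
  obtain p q V W where i: "i = (p, q, V, W)" by (cases i) auto
  have pq: "p < n" "q < n - p" "V \<subseteq> {0..p+q}" "W \<subseteq> {0..p+q}" "card V = p" "card W = Suc q"
    using assms(1) unfolding i SHI_index_def by auto
  have fV: "finite V" "finite W" using pq finite_subset by blast+
  define m where "m = n - p - q"
  have m1: "m \<ge> 1" using pq m_def by auto
  have f1: "length (fold face (rev [n - p + 1..<n + 1]) xs) = n + 1 - p"
    using length_fold_face[of "n+1" xs "n - p + 1"] assms pq by simp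
  have d1: "length (degen (m - 1) (fold face (rev [n - p + 1..<n + 1]) xs)) = n + 2 - p"
    using f1 m1 m_def pq by (subst length_degen) auto
  have f2: "length (fold face (rev [n - p - q..<n - p]) ys) = n + 1 - q"
    using length_fold_face[of "n - p" ys "n - p - q"] assms pq by simp
  have "length (fold degen (map (\<lambda>v. v + m) (sorted_list_of_set V))
         (degen (m - 1) (fold face (rev [n - p + 1..<n + 1]) xs))) = n + 2 - p + p"
  proof (subst length_fold_degen)
    show "\<forall>j<length (map (\<lambda>v. v + m) (sorted_list_of_set V)).
       map (\<lambda>v. v + m) (sorted_list_of_set V) ! j
       < length (degen (m - 1) (fold face (rev [n - p + 1..<n + 1]) xs)) + j"
    proof (intro allI impI)
      fix j assume j: "j < length (map (\<lambda>v. v + m) (sorted_list_of_set V))"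
      then have jc: "j < card V" by simp
      have "sorted_list_of_set V ! j + (card V - 1 - j) \<le> p + q" using sorted_bound[OF fV(1) pq(3) jc] .
      then show "map (\<lambda>v. v + m) (sorted_list_of_set V) ! j
       < length (degen (m - 1) (fold face (rev [n - p + 1..<n + 1]) xs)) + j"
        using jc d1 pq m_def by simp
    qed
    show "length (degen (m - 1) (fold face (rev [n - p + 1..<n + 1]) xs)) +
        length (map (\<lambda>v. v + m) (sorted_list_of_set V)) = n + 2 - p + p"
      using d1 pq by simp
  qed
  then show "length (fst (SHI_term n i (xs, ys))) = n + 2"
    using pq unfolding i SHI_term_def Let_def m_def by simp
  have "length (fold degen (map (\<lambda>w. w + m) (sorted_list_of_set W))
         (fold face (rev [n - p - q..<n - p]) ys)) = n + 1 - q + Suc q"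
  proof (subst length_fold_degen)
    show "\<forall>j<length (map (\<lambda>v. v + m) (sorted_list_of_set W)).
       map (\<lambda>v. v + m) (sorted_list_of_set W) ! j
       < length (fold face (rev [n - p - q..<n - p]) ys) + j"
    proof (intro allI impI)
      fix j assume j: "j < length (map (\<lambda>v. v + m) (sorted_list_of_set W))"
      then have jc: "j < card W" by simp
      have "sorted_list_of_set W ! j + (card W - 1 - j) \<le> p + q" using sorted_bound[OF fV(2) pq(4) jc] .
      then show "map (\<lambda>v. v + m) (sorted_list_of_set W) ! j
       < length (fold face (rev [n - p - q..<n - p]) ys) + j"
        using jc f2 pq m_def by simp
    qed
    show "length (fold face (rev [n - p - q..<n - p]) ys) +
        length (map (\<lambda>v. v + m) (sorted_list_of_set W)) = n + 1 - q + Suc q"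
      using f2 pq by simp
  qed
  then show "length (snd (SHI_term n i (xs, ys))) = n + 2"
    using pq unfolding i SHI_term_def Let_def m_def by simp
qed


definition FF :: "('a \<Rightarrow> 'a) \<Rightarrow> 'a list \<times> 'a list \<Rightarrow> 'a list \<times> 'a list" where
  "FF h u = (map h (fst u), map h (snd u))"

lemma FF_invol: assumes "\<And>x. h (h x) = x" shows "FF h (FF h u) = u"
  using assms by (simp add: FF_def map_idI)

lemma map_invol: assumes "\<And>x. h (h x) = x" shows "map h (map h u) = u"
  using assms by (simp add: map_idI)

lemma pdeg_FF: assumes "\<And>x. h (h x) = x" "length (fst u) = length (snd u)"
  shows "pdegenerate (FF h u) = pdegenerate u"
proof -
  have i: "inj h" using invol_inj assms by blast
  show ?thesis unfolding pdegenerate_def FF_def using assms(2)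
    by (auto simp: inj_eq[OF i])
qed

lemma deg_map: assumes "\<And>x. h (h x) = x" shows "degenerate (map h u) = degenerate u"
proof -
  have i: "inj h" using invol_inj assms by blast
  show ?thesis unfolding degenerate_def
    by (auto simp: inj_eq[OF i])
qed

lemma SHI_mem:
  "u \<in> SHI t \<longleftrightarrow> length (fst t) - 1 \<noteq> 0 \<and>
     odd (card {i \<in> SHI_index (length (fst t) - 1). SHI_term (length (fst t) - 1) i t = u}) \<and> \<not> pdegenerate u"
  unfolding SHI_def Let_def by (simp only: if_split_mem2 mem_Collect_eq empty_iff) blast

lemma SHI_mem_FF:
  assumes "\<And>x. h (h x) = x" "length xs = length ys"
  shows "u \<in> SHI (FF h (xs, ys)) \<longleftrightarrow> FF h u \<in> SHI (xs, ys)"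
proof -
  define n where "n = length xs - 1"
  have FFt: "FF h (xs, ys) = (map h xs, map h ys)" by (simp add: FF_def)
  have eq: "SHI_term n i (FF h (xs, ys)) = u \<longleftrightarrow> SHI_term n i (xs, ys) = FF h u" for i
  proof -
    have "SHI_term n i (FF h (xs, ys)) = FF h (SHI_term n i (xs, ys))"
      by (simp add: FFt SHI_term_map FF_def)
    then show ?thesis using FF_invol[OF assms(1), of u] FF_invol[OF assms(1), of "SHI_term n i (xs, ys)"] by auto
  qed
  show ?thesis
  proof (cases "n = 0")
    case True then show ?thesis unfolding SHI_mem FFt fst_conv length_map n_def[symmetric] by simp
  next
    case False
    have C: "{i \<in> SHI_index n. SHI_term n i (FF h (xs, ys)) = u} = {i \<in> SHI_index n. SHI_term n i (xs, ys) = FF h u}"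
      using eq by blast
    have P: "pdegenerate u = pdegenerate (FF h u)"
      if o: "odd (card {i \<in> SHI_index n. SHI_term n i (xs, ys) = FF h u})"
    proof -
      have "{i \<in> SHI_index n. SHI_term n i (xs, ys) = FF h u} \<noteq> {}"
        using o by (intro notI) simp
      then obtain j where j: "j \<in> SHI_index n" "SHI_term n j (xs, ys) = FF h u"
        by blast
      have lx: "length xs = Suc n" "length ys = Suc n" "n > 0"
        using False assms(2) unfolding n_def by auto
      have "length (fst (FF h u)) = length (snd (FF h u))"
        using SHI_term_length[OF j(1) lx] unfolding j(2) by simp
      then have "length (fst u) = length (snd u)" by (simp add: FF_def)
      from pdeg_FF[OF assms(1) this] show ?thesis by simp
    qed
    have "u \<in> SHI (FF h (xs, ys)) \<longleftrightarrow> odd (card {i \<in> SHI_index n. SHI_term n i (FF h (xs, ys)) = u}) \<and> \<not> pdegenerate u"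
      unfolding SHI_mem FFt fst_conv length_map n_def[symmetric] using False by simp
    also have "\<dots> \<longleftrightarrow> odd (card {i \<in> SHI_index n. SHI_term n i (xs, ys) = FF h u}) \<and> \<not> pdegenerate (FF h u)"
      unfolding C using P by blast
    also have "\<dots> \<longleftrightarrow> FF h u \<in> SHI (xs, ys)"
      unfolding SHI_mem fst_conv n_def[symmetric] using False by simp
    finally show ?thesis .
  qed
qed

lemma SHI_FF:
  assumes "\<And>x. h (h x) = x" "length xs = length ys"
  shows "SHI (FF h (xs, ys)) = FF h ` SHI (xs, ys)"
proof -
  have "SHI (FF h (xs, ys)) = {u. FF h u \<in> SHI (xs, ys)}"
    using SHI_mem_FF[OF assms] by blast
  also have "\<dots> = FF h ` {u. u \<in> SHI (xs, ys)}"
    by (rule invol_image_eq[OF FF_invol[OF assms(1)]])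
  finally show ?thesis by simp
qed

lemma SHI_set:
  assumes "u \<in> SHI (xs, ys)"
  shows "set (fst u) \<subseteq> set xs \<and> set (snd u) \<subseteq> set ys"
proof -
  from assms obtain n where "odd (card {i \<in> SHI_index n. SHI_term n i (xs, ys) = u})"
    unfolding SHI_mem by blast
  then have "{i \<in> SHI_index n. SHI_term n i (xs, ys) = u} \<noteq> {}"
    by (intro notI) simp
  then obtain i where "SHI_term n i (xs, ys) = u"
    by blast
  then show ?thesis using SHI_term_set by metis
qed

abbreviation tau :: perm where "tau \<equiv> transpose 0 1"
abbreviation rho :: perm where "rho \<equiv> transpose 0 1 \<circ> transpose 2 3"

lemma tau_invol: "tau \<circ> (tau \<circ> x) = x"
  by (auto simp: transpose_def)

lemma rho_invol: "rho \<circ> (rho \<circ> x) = x"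
  by (auto simp: transpose_def)

lemma perm2_lt: assumes "a permutes {..<2}" shows "a 0 < (2::nat)" "a 1 < 2"
  using permutes_in_image[OF assms] by auto

lemma tau_lt: "(x::nat) < 2 \<Longrightarrow> tau x = 1 - x"
  by (auto simp: transpose_def)

lemma b0: fixes f g :: perm shows "block id f g 0 = f 0" "block id f g 1 = f 1" "block id f g 2 = 2 + g 0" "block id f g 3 = 2 + g 1"
  by (simp_all add: block_def)

lemma rho_lt: "(x::nat) < 2 \<Longrightarrow> rho x = 1 - x" "x < 2 \<Longrightarrow> rho (2 + x) = 3 - x"
  by (auto simp: transpose_def)

lemma block_tau:
  assumes "a permutes {..<2}" "b permutes {..<2}"
  shows "block id (tau \<circ> a) (tau \<circ> b) = rho \<circ> block id a b"
proof
  fix k :: nat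
  have A: "a 0 < 2" "a 1 < 2" "b 0 < 2" "b 1 < 2"
    using perm2_lt[OF assms(1)] perm2_lt[OF assms(2)] by auto
  show "block id (tau \<circ> a) (tau \<circ> b) k = (rho \<circ> block id a b) k"
  proof (cases "k < 4")
    case False then show ?thesis by (simp add: block_def transpose_def)
  next
    case True
    then have "k = 0 \<or> k = 1 \<or> k = 2 \<or> k = 3" by auto
    then show ?thesis
    proof (elim disjE)
      assume k: "k = 0" show ?thesis unfolding k b0 comp_apply using A by (simp add: tau_lt transpose_def)
    next
      assume k: "k = 1" show ?thesis unfolding k b0 comp_apply using A by (simp add: tau_lt transpose_def)
    next
      assume k: "k = 2" show ?thesis unfolding k b0 comp_apply using A by (simp add: tau_lt transpose_def)
    next
      assume k: "k = 3" show ?thesis unfolding k b0 comp_apply using A by (simp add: tau_lt transpose_def)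
    qed
  qed
qed
lemma map2_tau:
  assumes "\<forall>p\<in>set xs. p permutes {..<2}" "\<forall>p\<in>set ys. p permutes {..<2}"
  shows "map2 (block id) (map ((\<circ>) tau) xs) (map ((\<circ>) tau) ys) = map ((\<circ>) rho) (map2 (block id) xs ys)"
  using assms
proof (induction xs arbitrary: ys)
  case Nil then show ?case by simp
next
  case (Cons x xs)
  note IH = Cons.IH and pr = Cons.prems
  show ?case
  proof (cases ys)
    case Nil then show ?thesis by simp
  next
    case (Cons y ys')
    have "block id (tau \<circ> x) (tau \<circ> y) = rho \<circ> block id x y"
      using pr Cons by (intro block_tau) auto
    moreover have "map2 (block id) (map ((\<circ>) tau) xs) (map ((\<circ>) tau) ys') = map ((\<circ>) rho) (map2 (block id) xs ys')"
      using pr Cons by (intro IH) auto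
    ultimately show ?thesis using Cons by (simp only: list.map zip_Cons_Cons prod.case)
  qed
qed

lemma gen_image_count:
  assumes F: "\<And>x. F (F x) = x" and G: "\<And>x. G (G x) = x"
    and S: "S' = F ` S" and M: "\<And>u. u \<in> S \<Longrightarrow> M (F u) = G (M u)"
    and D: "\<And>c. D (G c) = D c"
  shows "{c. odd (card {u \<in> S'. M u = c}) \<and> \<not> D c} = G ` {c. odd (card {u \<in> S. M u = c}) \<and> \<not> D c}"
proof -
  have injF: "inj F" using F by (metis injI)
  have ce: "card {u \<in> S'. M u = c} = card {u \<in> S. M u = G c}" for c
  proof -
    have "{u \<in> S'. M u = c} = F ` {u \<in> S. M u = G c}"
    proof (rule set_eqI, rule iffI)
      fix x assume "x \<in> {u \<in> S'. M u = c}"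
      then obtain y where y: "y \<in> S" "x = F y" "M (F y) = c" using S by auto
      then have "M y = G c" using M[OF y(1)] G by metis
      then show "x \<in> F ` {u \<in> S. M u = G c}" using y by auto
    next
      fix x assume "x \<in> F ` {u \<in> S. M u = G c}"
      then obtain y where y: "y \<in> S" "x = F y" "M y = G c" by auto
      then have "M (F y) = c" using M[OF y(1)] G by metis
      then show "x \<in> {u \<in> S'. M u = c}" using y S by auto
    qed
    then show ?thesis using card_image[OF inj_on_subset[OF injF]] by simp
  qed
  have "{c. odd (card {u \<in> S'. M u = c}) \<and> \<not> D c} = {c. odd (card {u \<in> S. M u = G c}) \<and> \<not> D (G c)}"
    using ce D by simp
  also have "\<dots> = G ` {c. odd (card {u \<in> S. M u = c}) \<and> \<not> D c}"
    by (rule invol_image_eq[where P = "\<lambda>c. odd (card {u \<in> S. M u = c}) \<and> \<not> D c", OF G])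
  finally show ?thesis .
qed

lemma gen_H2:
  assumes F: "\<And>x. F (F x) = x" and G: "\<And>x. G (G x) = x"
    and A: "\<And>s. s \<in> c \<Longrightarrow> H2_gen (F s) = G ` H2_gen s"
  shows "H2 (F ` c) = G ` H2 c"
proof -
  have injF: "inj F" using F by (metis injI)
  have ce: "card {s \<in> F ` c. u \<in> H2_gen s} = card {s \<in> c. G u \<in> H2_gen s}" for u
  proof -
    have "{s \<in> F ` c. u \<in> H2_gen s} = F ` {s \<in> c. G u \<in> H2_gen s}"
    proof (rule set_eqI, rule iffI)
      fix x assume "x \<in> {s \<in> F ` c. u \<in> H2_gen s}"
      then obtain s where s: "s \<in> c" "x = F s" "u \<in> G ` H2_gen s" using A by auto
      then obtain y where "y \<in> H2_gen s" "u = G y" by auto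
      then have "G u \<in> H2_gen s" using G by simp
      then show "x \<in> F ` {s \<in> c. G u \<in> H2_gen s}" using s by auto
    next
      fix x assume "x \<in> F ` {s \<in> c. G u \<in> H2_gen s}"
      then obtain s where s: "s \<in> c" "x = F s" "G u \<in> H2_gen s" by auto
      then have "G (G u) \<in> G ` H2_gen s" by blast
      then have "u \<in> H2_gen (F s)" using G A[OF s(1)] by simp
      then show "x \<in> {s \<in> F ` c. u \<in> H2_gen s}" using s by auto
    qed
    then show ?thesis using card_image[OF inj_on_subset[OF injF]] by simp
  qed
  have "H2 (F ` c) = {u. odd (card {s \<in> c. G u \<in> H2_gen s})}"
    unfolding H2_def ce by simp
  also have "\<dots> = G ` H2 c" unfolding H2_def
    by (rule invol_image_eq[where P = "\<lambda>u. odd (card {s \<in> c. u \<in> H2_gen s})", OF G])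
  finally show ?thesis .
qed

lemma H2_gen_act:
  assumes "\<forall>p\<in>set s. p permutes {..<2}"
  shows "H2_gen (map ((\<circ>) tau) s) = map ((\<circ>) rho) ` H2_gen s"
proof -
  have ftau: "\<And>x. (\<circ>) tau ((\<circ>) tau x) = x" by (rule tau_invol)
  have grho: "\<And>x. (\<circ>) rho ((\<circ>) rho x) = x" by (rule rho_invol)
  have gi: "\<And>x. map ((\<circ>) rho) (map ((\<circ>) rho) x) = x" by (rule map_invol, rule rho_invol)
  have S: "SHI (map ((\<circ>) tau) s, map ((\<circ>) tau) s) = FF ((\<circ>) tau) ` SHI (s, s)"
  proof -
    have e: "FF ((\<circ>) tau) (s, s) = (map ((\<circ>) tau) s, map ((\<circ>) tau) s)"
      unfolding FF_def by (simp only: fst_conv snd_conv)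
    show ?thesis using SHI_FF[OF ftau refl, of s] unfolding e .
  qed
  have Mu: "map2 (block id) (fst (FF ((\<circ>) tau) u)) (snd (FF ((\<circ>) tau) u))
     = map ((\<circ>) rho) (map2 (block id) (fst u) (snd u))" if u: "u \<in> SHI (s, s)" for u
  proof -
    have "\<forall>p\<in>set (fst u). p permutes {..<2}" "\<forall>p\<in>set (snd u). p permutes {..<2}"
      using SHI_set[OF u] assms by auto
    then show ?thesis unfolding FF_def fst_conv snd_conv by (rule map2_tau)
  qed
  show ?thesis unfolding H2_gen_def
    by (rule gen_image_count[where F="FF ((\<circ>) tau)" and G="map ((\<circ>) rho)" and S="SHI (s, s)"
      and S'="SHI (map ((\<circ>) tau) s, map ((\<circ>) tau) s)" and M="\<lambda>u. map2 (block id) (fst u) (snd u)"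
      and D=degenerate, OF FF_invol[OF ftau] gi S Mu deg_map[OF grho]])
qed

theorem mainTheorem7:
  assumes "E_chain 2 c"
  shows "H2 (E_act (transpose 0 1) c) = E_act (transpose 0 1 \<circ> transpose 2 3) (H2 c)"
proof -
  have sp: "s \<in> c \<Longrightarrow> \<forall>p\<in>set s. p permutes {..<2}" for s
    using assms unfolding E_chain_def E_simplex_def by auto
  have fi: "\<And>x. map ((\<circ>) tau) (map ((\<circ>) tau) x) = x" by (rule map_invol, rule tau_invol)
  have gi: "\<And>x. map ((\<circ>) rho) (map ((\<circ>) rho) x) = x" by (rule map_invol, rule rho_invol)
  show ?thesis unfolding E_act_def
    by (rule gen_H2[OF fi gi H2_gen_act[OF sp]])
qed

end
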